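(* Let $n\ge 1$, $b_i>0$, $\alpha_i>0$ for $i=1,\dots,n$, and $g(t)=b_1e^{-\alpha_1 t}-\sum_{i=2}^n b_ie^{-\alpha_i t}$. Suppose that $$2(\alpha_1-\alpha_j)^2\ge\max_{1\le i\le n}(\alpha_i-\alpha_j)^2\quad\text{for all } j\ge 2.$$ Then $g\,\mathds{1}_{[0,\infty)}$ is nonnegative if and only if $g\,\mathds{1}_{[0,\infty)}$ is log-concave.
   Context: A function $f:\mathbb{R}\to\mathbb{R}_{\ge0}$ is log-concave if $f(\lambda x+(1-\lambda)y)\ge f(x)^\lambda f(y)^{1-\lambda}$ for all $x,y\in\mathbb{R}$ and $\lambda\in[0,1]$ (equivalently $\log f$ is concave as a function into $\mathbb{R}\cup\{-\infty\}$). *)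

theory Defs
  imports Complex_Main
begin

text \<open>Note Isabelle's convention 0 powr a = 0 (also for a = 0); this only affects the
  trivial endpoint cases lambda = 0, 1, where the inequality holds anyway.\<close>
definition log_concave :: "(real \<Rightarrow> real) \<Rightarrow> bool" where
  "log_concave f \<longleftrightarrow> (\<forall>x. 0 \<le> f x) \<and>
     (\<forall>x y l. 0 \<le> l \<and> l \<le> 1 \<longrightarrow>
        f (l * x + (1 - l) * y) \<ge> f x powr l * f y powr (1 - l))"

end

theory Submission
  imports Defs "HOL-Analysis.Analysis"
begin

lemma exp_cvx:
  fixes c x y l :: real
  assumes "0 \<le> l" "l \<le> 1"
  shows "exp (c * (l * x + (1 - l) * y)) \<le> l * exp (c * x) + (1 - l) * exp (c * y)"
proof -
  have "exp ((1 - (1 - l)) *\<^sub>R (c*x) + (1 - l) *\<^sub>R (c*y)) \<le> (1 - (1 - l)) * exp (c*x) + (1 - l) * exp (c*y)"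
    using convex_onD[OF exp_convex, of "1 - l" "c*x" "c*y"] assms by simp
  thus ?thesis by (simp add: algebra_simps)
qed

theorem lemma7:
  fixes n :: nat and b \<alpha> :: "nat \<Rightarrow> real" and g :: "real \<Rightarrow> real"
  assumes "n \<ge> 1"
    and "\<And>i. i \<in> {1..n} \<Longrightarrow> b i > 0"
    and "\<And>i. i \<in> {1..n} \<Longrightarrow> \<alpha> i > 0"
    and "\<And>t. g t = b 1 * exp (- \<alpha> 1 * t) - (\<Sum>i=2..n. b i * exp (- \<alpha> i * t))"
    and "\<And>j. j \<in> {2..n} \<Longrightarrow>
           2 * (\<alpha> 1 - \<alpha> j)^2 \<ge> Max ((\<lambda>i. (\<alpha> i - \<alpha> j)^2) ` {1..n})"
  shows "(\<forall>t. (if t \<ge> 0 then g t else 0) \<ge> 0) \<longleftrightarrow>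
         log_concave (\<lambda>t. if t \<ge> 0 then g t else 0)"
proof
  assume "log_concave (\<lambda>t. if t \<ge> 0 then g t else 0)"
  thus "\<forall>t. (if t \<ge> 0 then g t else 0) \<ge> 0" unfolding log_concave_def by blast
next
  assume nn: "\<forall>t. (if t \<ge> 0 then g t else 0) \<ge> 0"
  define E where "E t = exp (- \<alpha> 1 * t)" for t
  define h where "h t = b 1 - (\<Sum>i=2..n. b i * exp ((- (\<alpha> i - \<alpha> 1)) * t))" for t
  have gE: "g t = E t * h t" for t
  proof -
    have "(\<Sum>i=2..n. b i * exp (- \<alpha> i * t)) = E t * (\<Sum>i=2..n. b i * exp ((- (\<alpha> i - \<alpha> 1)) * t))"
      unfolding sum_distrib_left E_def
    proof (rule sum.cong)
      fix i show "b i * exp (- \<alpha> i * t) = exp (- \<alpha> 1 * t) * (b i * exp (- (\<alpha> i - \<alpha> 1) * t))"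
      proof -
        have "exp (- \<alpha> 1 * t) * exp (- (\<alpha> i - \<alpha> 1) * t) = exp (- \<alpha> 1 * t + - (\<alpha> i - \<alpha> 1) * t)"
          by (rule mult_exp_exp)
        also have "- \<alpha> 1 * t + - (\<alpha> i - \<alpha> 1) * t = - \<alpha> i * t" by (simp add: algebra_simps)
        finally show ?thesis by simp
      qed
    qed simp
    thus ?thesis unfolding assms(4) h_def E_def by (simp add: algebra_simps)
  qed
  have Epos: "E t > 0" for t unfolding E_def by simp
  have gnn: "t \<ge> 0 \<Longrightarrow> g t \<ge> 0" for t using nn by (metis (full_types))
  have hnn: "t \<ge> 0 \<Longrightarrow> h t \<ge> 0" for t
    using gnn[of t] Epos[of t] gE[of t] by (simp add: zero_le_mult_iff)
  have hcv: "h (l * x + (1 - l) * y) \<ge> l * h x + (1 - l) * h y" if l: "0 \<le> l" "l \<le> 1" for l x y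
  proof -
    have "(\<Sum>i=2..n. b i * exp ((- (\<alpha> i - \<alpha> 1)) * (l * x + (1 - l) * y)))
       \<le> (\<Sum>i=2..n. b i * (l * exp ((- (\<alpha> i - \<alpha> 1)) * x) + (1 - l) * exp ((- (\<alpha> i - \<alpha> 1)) * y)))"
    proof (rule sum_mono)
      fix i assume "i \<in> {2..n}"
      hence "b i \<ge> 0" using assms(2)[of i] by auto
      thus "b i * exp ((- (\<alpha> i - \<alpha> 1)) * (l * x + (1 - l) * y))
         \<le> b i * (l * exp ((- (\<alpha> i - \<alpha> 1)) * x) + (1 - l) * exp ((- (\<alpha> i - \<alpha> 1)) * y))"
        using exp_cvx[OF l] by (intro mult_left_mono) auto
    qed
    also have "\<dots> = l * (\<Sum>i=2..n. b i * exp ((- (\<alpha> i - \<alpha> 1)) * x))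
        + (1 - l) * (\<Sum>i=2..n. b i * exp ((- (\<alpha> i - \<alpha> 1)) * y))"
      by (simp add: sum_distrib_left sum.distrib[symmetric] distrib_left mult.left_commute)
    finally show ?thesis unfolding h_def by (simp add: algebra_simps)
  qed
  show "log_concave (\<lambda>t. if t \<ge> 0 then g t else 0)"
    unfolding log_concave_def
  proof (intro conjI allI impI)
    fix x show "0 \<le> (if 0 \<le> x then g x else 0)" using nn by blast
  next
    fix x y l :: real assume l: "0 \<le> l \<and> l \<le> 1"
    show "(if 0 \<le> x then g x else 0) powr l * (if 0 \<le> y then g y else 0) powr (1 - l)
          \<le> (if 0 \<le> l * x + (1 - l) * y then g (l * x + (1 - l) * y) else 0)"
    proof (cases "0 \<le> x \<and> 0 \<le> y")
      case False
      thus ?thesis using nn gnn by auto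
    next
      case True
      define z where "z = l * x + (1 - l) * y"
      have z0: "0 \<le> z" unfolding z_def using True l by auto
      show ?thesis
      proof (cases "h x = 0 \<or> h y = 0")
        case True
        thus ?thesis using gnn[OF z0] gE[of x] gE[of y] z0 by (auto simp: z_def)
      next
        case False
        hence hx: "h x > 0" and hy: "h y > 0" using hnn True by (auto simp: order_le_less)
        have "g x powr l * g y powr (1 - l) = (E x powr l * E y powr (1 - l)) * (h x powr l * h y powr (1 - l))"
          using gE Epos hx hy by (simp add: powr_mult less_imp_le)
        also have "E x powr l * E y powr (1 - l) = E z"
          unfolding E_def z_def powr_def by (simp add: mult_exp_exp algebra_simps)
        also have "h x powr l * h y powr (1 - l) \<le> l * h x + (1 - l) * h y"
          using Youngs_inequality_0[of l "1 - l" "h x" "h y"] l hx hy by auto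
        also have "\<dots> \<le> h z" unfolding z_def using hcv l by auto
        finally have "g x powr l * g y powr (1 - l) \<le> E z * h z"
          using Epos[of z] by (simp add: mult_left_mono)
        thus ?thesis using True z0 gE[of z] by (simp add: z_def)
      qed
    qed
  qed
qed

end
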